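(* Let $1\le p\le 2$ and $0\le\nu\le\frac{\pi}{2}$. The function $K(\theta)=\cos^p(\theta)+\cos^p(\frac{\pi}{2}-\nu-\theta)$ on the interval $0\le\theta\le\frac{\pi}{2}-\nu$ attains its minimum only at the endpoints of the interval. In particular $K(\theta)\ge 1+\sin^p\nu$ for all such $\theta$. *)

theory Defs
  imports Complex_Main
begin

text \<open>K(theta) = cos^p(theta) + cos^p(pi/2 - nu - theta). On the interval of interest
  both cosines are nonnegative, so the real power is taken with powr.\<close>
definition K :: "real \<Rightarrow> real \<Rightarrow> real \<Rightarrow> real" where
  "K p \<nu> \<theta> = cos \<theta> powr p + cos (pi/2 - \<nu> - \<theta>) powr p"

end

theory Submission
  imports Defs "HOL-Analysis.Convex"
begin

lemma powr_concave:
  assumes "0 < q" "q \<le> 1" shows "concave_on {0<..} (\<lambda>x::real. x powr q)"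
proof (rule f''_le0_imp_concave[where f' = "\<lambda>x. q * x powr (q - 1)" and f'' = "\<lambda>x. q * ((q - 1) * x powr (q - 2))"])
  fix x :: real assume x: "x \<in> {0<..}"
  show "DERIV (\<lambda>x. x powr q) x :> q * x powr (q - 1)"
    using x by (auto intro!: derivative_eq_intros)
  show "DERIV (\<lambda>x. q * x powr (q - 1)) x :> q * ((q - 1) * x powr (q - 2))"
    using x by (auto intro!: derivative_eq_intros simp: algebra_simps)
  show "q * ((q - 1) * x powr (q - 2)) \<le> 0"
    using x assms by (intro mult_nonneg_nonpos mult_nonpos_nonneg) auto
qed auto

lemma key:
  fixes A B q :: real
  assumes q: "0 < q" "q \<le> 1" and AB: "0 \<le> A" "A \<le> 1" "0 \<le> B" "B \<le> 1"
    and C: "1 \<le> A + B"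
  shows "A powr q + B powr q \<ge> 1 + (A + B - 1) powr q"
proof -
  define D where "D = A + B - 1"
  have D: "0 \<le> D" "D \<le> A" "D \<le> B" using AB C by (auto simp: D_def)
  show ?thesis
  proof (cases "D = 0")
    case True
    have "A powr 1 \<le> A powr q" "B powr 1 \<le> B powr q" using AB q
      by (intro powr_mono'; simp)+
    then show ?thesis using True AB unfolding D_def by simp
  next
    case False
    then have Dp: "D > 0" using D by simp
    show ?thesis
    proof (cases "D = 1")
      case True then have "A = 1" "B = 1" using AB D D_def by auto
      then show ?thesis using True D_def by simp
    next
      case False
      then have D1: "D < 1" using AB D_def by simp
      define t where "t = (A - D) / (1 - D)"
      have t: "0 \<le> t" "t \<le> 1" using D D1 AB unfolding t_def by (auto simp: field_simps D_def)
      have tt: "t * (1 - D) = A - D" using D1 unfolding t_def by simp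
      have eA: "A = (1 - t) *\<^sub>R D + t *\<^sub>R 1" using tt by (simp add: algebra_simps)
      have eB: "B = (1 - (1-t)) *\<^sub>R D + (1-t) *\<^sub>R 1" using tt by (simp add: algebra_simps D_def)
      have cc: "concave_on {0<..} (\<lambda>x::real. x powr q)" by (rule powr_concave[OF q])
      have "A powr q \<ge> (1 - t) * D powr q + t * 1 powr q"
        unfolding eA by (rule concave_onD[OF cc]) (use t Dp in auto)
      moreover have "B powr q \<ge> (1 - (1-t)) * D powr q + (1-t) * 1 powr q"
        unfolding eB by (rule concave_onD[OF cc]) (use t Dp in auto)
      ultimately show ?thesis unfolding D_def[symmetric] by (simp add: algebra_simps)
    qed
  qed
qed

lemma sq: "(x::real) \<ge> 0 \<Longrightarrow> x powr p = (x^2) powr (p/2)"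
proof (cases "x = 0")
  case False
  assume "x \<ge> 0"
  then have "x > 0" using False by simp
  then have "(x^2) powr (p/2) = (x powr 2) powr (p/2)" by (simp add: powr_realpow)
  also have "\<dots> = x powr p" by (simp add: powr_powr)
  finally show ?thesis by simp
qed simp

lemma trig: "cos (t::real) ^ 2 + cos (a - t) ^ 2 = 1 + cos a * cos (2*t - a)"
proof -
  have "cos (2*t - a) = cos (2*t) * cos a + sin (2*t) * sin a" by (simp add: cos_diff)
  also have "\<dots> = (cos t ^ 2 - sin t ^ 2) * cos a + 2 * sin t * cos t * sin a"
    by (simp add: cos_double sin_double)
  finally have e: "cos (2*t - a) = (cos t ^ 2 - sin t ^ 2) * cos a + 2 * sin t * cos t * sin a" .
  have s1: "sin t ^ 2 = 1 - cos t ^ 2" by (simp add: sin_squared_eq)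
  have s2: "sin a ^ 2 = 1 - cos a ^ 2" by (simp add: sin_squared_eq)
  show ?thesis unfolding cos_diff cos_double sin_double
    using sin_cos_squared_add[of t] sin_cos_squared_add[of a] by algebra
qed


lemma cos_ge_cos:
  fixes t a :: real
  assumes "0 \<le> t" "t \<le> a" "a \<le> pi/2"
  shows "cos (2*t - a) \<ge> cos a"
        "0 < t \<Longrightarrow> t < a \<Longrightarrow> cos (2*t - a) > cos a"
proof -
  have "cos (2*t - a) = cos \<bar>2*t - a\<bar>" by simp
  moreover have "\<bar>2*t - a\<bar> \<le> a" using assms by auto
  moreover have "cos a \<le> cos \<bar>2*t - a\<bar>"
    using \<open>\<bar>2*t - a\<bar> \<le> a\<close> assms pi_gt_zero by (intro cos_monotone_0_pi_le) auto
  ultimately show "cos (2*t - a) \<ge> cos a" by simp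
  show "cos (2*t - a) > cos a" if "0 < t" "t < a"
  proof -
    have "\<bar>2*t - a\<bar> < a" using assms that by auto
    then have "cos a < cos \<bar>2*t - a\<bar>" using assms pi_gt_zero
      by (intro cos_monotone_0_pi) auto
    then show ?thesis by simp
  qed
qed

theorem lemma2p4:
  fixes p \<nu> :: real
  assumes "1 \<le> p" and "p \<le> 2" and "0 \<le> \<nu>" and "\<nu> \<le> pi/2"
  shows "(\<not> (p = 2 \<and> \<nu> = 0) \<longrightarrow>
           (\<forall>\<theta>\<in>{0<..<pi/2 - \<nu>}. K p \<nu> \<theta> > K p \<nu> 0 \<and> K p \<nu> \<theta> > K p \<nu> (pi/2 - \<nu>)))
       \<and> (\<forall>\<theta>\<in>{0..pi/2 - \<nu>}. K p \<nu> \<theta> \<ge> K p \<nu> 0 \<and> K p \<nu> \<theta> \<ge> K p \<nu> (pi/2 - \<nu>))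
       \<and> (\<forall>\<theta>\<in>{0..pi/2 - \<nu>}. K p \<nu> \<theta> \<ge> 1 + sin \<nu> powr p)"
proof -
  define a where "a = pi/2 - \<nu>"
  define q where "q = p/2"
  define c where "c = sin \<nu>"
  have a: "0 \<le> a" "a \<le> pi/2" using assms by (auto simp: a_def)
  have q: "0 < q" "q \<le> 1" using assms by (auto simp: q_def)
  have ca: "cos a = c" by (simp add: a_def c_def cos_diff)
  have c0: "0 \<le> c" using assms unfolding c_def by (intro sin_ge_zero) auto
  have c1: "c \<le> 1" by (simp add: c_def)
  have cp: "c powr p = (c^2) powr q" unfolding q_def by (rule sq[OF c0])
  have K0: "K p \<nu> 0 = 1 + (c^2) powr q"
    using cp by (simp add: K_def a_def[symmetric] ca)
  have Ka: "K p \<nu> a = 1 + (c^2) powr q"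
    using cp by (simp add: K_def a_def[symmetric] ca)
  have Kt: "K p \<nu> t = (cos t ^ 2) powr q + (cos (a - t) ^ 2) powr q"
    and AB: "cos t ^ 2 + cos (a - t) ^ 2 = 1 + c * cos (2*t - a)"
    and bnd: "0 \<le> cos t ^ 2" "cos t ^ 2 \<le> 1" "0 \<le> cos (a - t) ^ 2" "cos (a - t) ^ 2 \<le> 1"
    if t: "0 \<le> t" "t \<le> a" for t
  proof -
    have "0 \<le> cos t" using t a by (intro cos_ge_zero) auto
    then have e1: "cos t powr p = (cos t ^ 2) powr q" unfolding q_def by (rule sq)
    have "0 \<le> cos (a - t)" using t a by (intro cos_ge_zero) auto
    then have e2: "cos (a - t) powr p = (cos (a - t) ^ 2) powr q" unfolding q_def by (rule sq)
    show "K p \<nu> t = (cos t ^ 2) powr q + (cos (a - t) ^ 2) powr q"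
      unfolding K_def a_def[symmetric] e1 e2 ..
    show "cos t ^ 2 + cos (a - t) ^ 2 = 1 + c * cos (2*t - a)" using trig ca by simp
    show "0 \<le> cos t ^ 2" "cos t ^ 2 \<le> 1" "0 \<le> cos (a - t) ^ 2" "cos (a - t) ^ 2 \<le> 1"
      by (auto simp: abs_square_le_1)
  qed
  have main: "K p \<nu> t \<ge> 1 + (c^2) powr q" if t: "0 \<le> t" "t \<le> a" for t
  proof -
    have s: "cos (2*t - a) \<ge> c" using cos_ge_cos(1)[OF t a(2)] ca by simp
    have "c^2 \<le> c * cos (2*t - a)" using s c0 by (simp add: power2_eq_square mult_left_mono)
    moreover have "0 \<le> c^2" by simp
    ultimately have "0 \<le> c * cos (2*t - a)" by linarith
    then have "1 \<le> cos t ^ 2 + cos (a - t) ^ 2" using AB[OF t] by linarith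
    note k = key[OF q bnd[OF t] this]
    have "(c^2) powr q \<le> (c * cos (2*t - a)) powr q"
      using \<open>c^2 \<le> _\<close> q by (intro powr_mono2) auto
    moreover have e: "cos t ^ 2 + cos (a - t) ^ 2 - 1 = c * cos (2*t - a)" using AB[OF t] by linarith
    ultimately show ?thesis using k Kt[OF t] unfolding e by linarith
  qed
  have strict: "K p \<nu> t > 1 + (c^2) powr q"
    if t: "0 < t" "t < a" and ne: "\<not> (p = 2 \<and> \<nu> = 0)" for t
  proof (cases "\<nu> = 0")
    case False
    then have "c > 0" using assms unfolding c_def by (intro sin_gt_zero) auto
    have s: "cos (2*t - a) > c" using cos_ge_cos(2)[OF _ _ a(2) t] t ca by simp
    have "c^2 < c * cos (2*t - a)" using s \<open>c > 0\<close> by (simp add: power2_eq_square)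
    moreover have "0 \<le> c^2" by simp
    ultimately have "0 \<le> c * cos (2*t - a)" by linarith
    then have "1 \<le> cos t ^ 2 + cos (a - t) ^ 2" using AB[of t] t by linarith
    note k = key[OF q bnd[of t] this]
    have "(c^2) powr q < (c * cos (2*t - a)) powr q"
      using \<open>c^2 < _\<close> q by (intro powr_less_mono2) auto
    moreover have e: "cos t ^ 2 + cos (a - t) ^ 2 - 1 = c * cos (2*t - a)" using AB[of t] t by linarith
    ultimately show ?thesis using k Kt[of t] t unfolding e by linarith
  next
    case True
    then have q1: "q < 1" using ne assms by (auto simp: q_def)
    have c00: "c = 0" using True by (simp add: c_def)
    have a2: "a = pi/2" using True by (simp add: a_def)
    have ct: "0 < cos t" "cos t < 1" using t a2 
      by (auto intro!: cos_gt_zero cos_monotone_0_pi[where y=0, simplified])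
    have ct2: "0 < cos (a - t)" "cos (a - t) < 1" using t a2 
      by (auto intro!: cos_gt_zero cos_monotone_0_pi[where y=0, simplified])
    have "(cos t ^ 2) powr 1 < (cos t ^ 2) powr q"
      using ct q1 by (intro powr_less_mono') (auto simp: power_less_one_iff abs_square_less_1)
    moreover have "(cos (a-t) ^ 2) powr 1 < (cos (a-t) ^ 2) powr q"
      using ct2 q1 by (intro powr_less_mono') (auto simp: abs_square_less_1)
    moreover have "cos t ^ 2 + cos (a - t) ^ 2 = 1" using AB[of t] t c00 by simp
    moreover have "(c^2) powr q = 0" using c00 by simp
    ultimately show ?thesis using Kt[of t] t by simp
  qed
  have S: "sin \<nu> powr p = (c^2) powr q" using cp c_def by simp
  show ?thesis
    unfolding a_def[symmetric] S K0 Ka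
  proof (intro conjI impI ballI)
    fix t assume "t \<in> {0<..<a}" "\<not> (p = 2 \<and> \<nu> = 0)"
    then show "1 + (c^2) powr q < K p \<nu> t" "1 + (c^2) powr q < K p \<nu> t" using strict by auto
  next
    fix t assume "t \<in> {0..a}"
    then show "1 + (c^2) powr q \<le> K p \<nu> t" "1 + (c^2) powr q \<le> K p \<nu> t" "1 + (c^2) powr q \<le> K p \<nu> t"
      using main by auto
  qed
qed

end
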